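(* Let $p\in\mathbb{N}$ and let $\gamma^*$ be a DAG on $[p]$. Suppose the random vector $X=(X_1,\dots,X_p)^{\mathrm T}$ is generated by the linear structural equation model \[X_j = X_{\mathrm{pa}^*(j)}^{\mathrm T}\beta_j^* + \epsilon_j,\qquad j\in[p],\] where $\mathrm{pa}^*(j)$ is the parent set of $j$ in $\gamma^*$, every entry of $\beta_j^*\in\mathbb{R}^{|\mathrm{pa}^*(j)|}$ is non-zero, and $\epsilon_1,\dots,\epsilon_p$ are independent with $E(\epsilon_j)=0$ and $\mathrm{var}(\epsilon_j)=\sigma^2$ for all $j$, for a common $\sigma^2>0$. For every DAG $\gamma$ on $[p]$ define \[ r_j^\gamma := \min_{\beta_j\in\mathbb{R}^{|\mathrm{pa}^\gamma(j)|}} E\big(X_j - X_{\mathrm{pa}^\gamma(j)}^{\mathrm T}\beta_j\big)^2,\quad j\in[p],\qquad r^\gamma:=\sum_{j=1}^p r_j^\gamma ,\] (with $r_j^\gamma = E(X_j^2)$ when $\mathrm{pa}^\gamma(j)=\emptyset$), and write $r^* := r^{\gamma^*}$. Then for every DAG $\gamma$ on $[p]$, $r^\gamma\ge r^*$ $(=p\sigma^2)$, and equality holds if and only if $\gamma\supseteq\gamma^*$, i.e. every directed edge of $\gamma^*$ is an edge of $\gamma$.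
   Context: A DAG on $[p]=\{1,\dots,p\}$ is a pair $([p],E)$ with $E\subset[p]\times[p]$ a set of directed edges containing no directed cycle; $(k,j)\in E$ means $k$ is a parent of $j$, and $\mathrm{pa}^\gamma(j)$ denotes the set of parents of $j$ in $\gamma$. For $x\in\mathbb{R}^p$ and $I\subset[p]$, $x_I$ is the subvector $(x_k)_{k\in I}$. $\gamma'\supseteq\gamma$ means the edge set of $\gamma'$ contains that of $\gamma$. Expectations are under the true data-generating distribution of the model. *)

theory Defs
  imports "HOL-Probability.Probability"
begin

definition is_dag :: "nat \<Rightarrow> (nat \<times> nat) set \<Rightarrow> bool" where
  "is_dag p E \<longleftrightarrow> E \<subseteq> {1..p} \<times> {1..p} \<and> acyclic E"

definition pa :: "(nat \<times> nat) set \<Rightarrow> nat \<Rightarrow> nat set" where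
  "pa E j = {k. (k, j) \<in> E}"

text \<open>A coefficient vector in R^|pa(j)| is represented by a function beta :: nat => real,
  of which only the values on pa(j) matter.\<close>
definition resid_risk :: "'a measure \<Rightarrow> (nat \<Rightarrow> 'a \<Rightarrow> real) \<Rightarrow> (nat \<times> nat) set \<Rightarrow> nat \<Rightarrow> real" where
  "resid_risk M X E j =
     (INF beta \<in> (UNIV :: (nat \<Rightarrow> real) set).
        integral\<^sup>L M (\<lambda>\<omega>. (X j \<omega> - (\<Sum>k\<in>pa E j. beta k * X k \<omega>))\<^sup>2))"

definition total_risk :: "'a measure \<Rightarrow> (nat \<Rightarrow> 'a \<Rightarrow> real) \<Rightarrow> nat \<Rightarrow> (nat \<times> nat) set \<Rightarrow> real" where
  "total_risk M X p E = (\<Sum>j=1..p. resid_risk M X E j)"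

end

theory Submission
  imports Defs
begin


locale lin =
  fixes I :: "nat set" and a :: "nat \<Rightarrow> nat \<Rightarrow> real"
  assumes finI: "finite I"
begin

definition ip :: "(nat \<Rightarrow> real) \<Rightarrow> (nat \<Rightarrow> real) \<Rightarrow> real" where
  "ip u v = (\<Sum>i\<in>I. u i * v i)"

definition nrm2 :: "(nat \<Rightarrow> real) \<Rightarrow> real" where
  "nrm2 v = (\<Sum>i\<in>I. (v i)\<^sup>2)"

definition res :: "(nat \<Rightarrow> real) \<Rightarrow> nat set \<Rightarrow> (nat \<Rightarrow> real) \<Rightarrow> nat \<Rightarrow> real" where
  "res v K \<beta> = (\<lambda>i. v i - (\<Sum>k\<in>K. \<beta> k * a k i))"

definition projc :: "(nat \<Rightarrow> real) \<Rightarrow> nat set \<Rightarrow> (nat \<Rightarrow> real) \<Rightarrow> bool" where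
  "projc v K \<beta> \<longleftrightarrow> (\<forall>k\<in>K. ip (res v K \<beta>) (a k) = 0)"

definition dist2 :: "(nat \<Rightarrow> real) \<Rightarrow> nat set \<Rightarrow> real" where
  "dist2 v K = nrm2 (res v K (SOME \<beta>. projc v K \<beta>))"

lemma ip_comm: "ip u v = ip v u"
  by (simp add: ip_def mult.commute)

lemma nrm2_ip: "nrm2 v = ip v v"
  by (simp add: ip_def nrm2_def power2_eq_square)

lemma ip_diff_left: "ip (\<lambda>i. u i - w i) z = ip u z - ip w z"
  by (simp add: ip_def left_diff_distrib sum_subtractf)

lemma ip_add_left: "ip (\<lambda>i. u i + w i) z = ip u z + ip w z"
  by (simp add: ip_def distrib_right sum.distrib)

lemma ip_scale_left: "ip (\<lambda>i. c * u i) z = c * ip u z"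
  by (simp add: ip_def sum_distrib_left mult.assoc)

lemma ip_sum_left: "ip (\<lambda>i. \<Sum>k\<in>K. f k i) z = (\<Sum>k\<in>K. ip (f k) z)"
  by (simp add: ip_def sum_distrib_right sum.swap[of _ K I])

lemma ip_cong: "(\<And>i. i \<in> I \<Longrightarrow> u i = u' i) \<Longrightarrow> (\<And>i. i \<in> I \<Longrightarrow> v i = v' i) \<Longrightarrow> ip u v = ip u' v'"
  by (simp add: ip_def)

lemma nrm2_cong: "(\<And>i. i \<in> I \<Longrightarrow> u i = u' i) \<Longrightarrow> nrm2 u = nrm2 u'"
  by (simp add: nrm2_def)

lemma nrm2_nonneg: "nrm2 v \<ge> 0"
  by (simp add: nrm2_def sum_nonneg)

lemma nrm2_zero_iff: "nrm2 v = 0 \<longleftrightarrow> (\<forall>i\<in>I. v i = 0)"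
  unfolding nrm2_def using finI by (simp add: sum_nonneg_eq_0_iff)

lemma ip_zero_left: "nrm2 v = 0 \<Longrightarrow> ip v w = 0"
  by (simp add: nrm2_zero_iff ip_def)

lemma ip_res_left: "ip (res v K \<beta>) w = ip v w - (\<Sum>k\<in>K. \<beta> k * ip (a k) w)"
proof -
  have "ip (res v K \<beta>) w = ip v w - ip (\<lambda>i. \<Sum>k\<in>K. \<beta> k * a k i) w"
    unfolding res_def by (rule ip_diff_left)
  also have "ip (\<lambda>i. \<Sum>k\<in>K. \<beta> k * a k i) w = (\<Sum>k\<in>K. ip (\<lambda>i. \<beta> k * a k i) w)"
    by (rule ip_sum_left)
  also have "\<dots> = (\<Sum>k\<in>K. \<beta> k * ip (a k) w)"
    by (simp add: ip_scale_left)
  finally show ?thesis .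
qed

lemma nrm2_add: "nrm2 (\<lambda>i. u i + w i) = nrm2 u + 2 * ip u w + nrm2 w"
  by (simp add: nrm2_def ip_def power2_sum sum.distrib sum_distrib_left mult.assoc)

lemma nrm2_diff: "nrm2 (\<lambda>i. u i - w i) = nrm2 u - 2 * ip u w + nrm2 w"
  by (simp add: nrm2_def ip_def power2_diff sum.distrib sum_subtractf sum_distrib_left mult.assoc)

lemma proj_insert:
  assumes K: "finite K" "x \<notin> K" and pb: "projc v K \<beta>" and pg: "projc (a x) K \<gamma>"
    and nz: "nrm2 (res (a x) K \<gamma>) \<noteq> 0"
  defines "c \<equiv> ip (res v K \<beta>) (res (a x) K \<gamma>) / nrm2 (res (a x) K \<gamma>)"
  defines "\<beta>' \<equiv> (\<lambda>l. if l = x then c else \<beta> l - c * \<gamma> l)"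
  shows "res v (insert x K) \<beta>' = (\<lambda>i. res v K \<beta> i - c * res (a x) K \<gamma> i)"
    and "projc v (insert x K) \<beta>'"
proof -
  let ?r = "res v K \<beta>" and ?y = "res (a x) K \<gamma>"
  have sK: "(\<Sum>k\<in>K. \<beta>' k * a k i) = (\<Sum>k\<in>K. \<beta> k * a k i) - c * (\<Sum>k\<in>K. \<gamma> k * a k i)" for i
  proof -
    have "(\<Sum>k\<in>K. \<beta>' k * a k i) = (\<Sum>k\<in>K. (\<beta> k - c * \<gamma> k) * a k i)"
      using K by (auto simp: \<beta>'_def intro!: sum.cong)
    then show ?thesis by (simp add: left_diff_distrib sum_subtractf sum_distrib_left mult.assoc)
  qed
  have bx: "\<beta>' x = c" by (simp add: \<beta>'_def)
  show eq: "res v (insert x K) \<beta>' = (\<lambda>i. ?r i - c * ?y i)"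
  proof
    fix i
    have "res v (insert x K) \<beta>' i = v i - (\<beta>' x * a x i + (\<Sum>k\<in>K. \<beta>' k * a k i))"
      unfolding res_def by (simp only: sum.insert[OF K])
    also have "\<dots> = ?r i - c * ?y i"
      unfolding sK bx res_def by (simp add: algebra_simps)
    finally show "res v (insert x K) \<beta>' i = ?r i - c * ?y i" .
  qed
  have o1: "ip ?r (a k) = 0" "ip ?y (a k) = 0" if "k \<in> K" for k
    using pb pg that by (auto simp: projc_def)
  have ax: "ip (a x) w = ip ?y w + (\<Sum>k\<in>K. \<gamma> k * ip (a k) w)" for w
    by (simp add: ip_res_left)
  have ry: "ip (\<lambda>i. ?r i - c * ?y i) ?y = 0"
  proof -
    have "ip (\<lambda>i. ?r i - c * ?y i) ?y = ip ?r ?y - c * nrm2 ?y"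
      by (simp only: ip_diff_left ip_scale_left nrm2_ip)
    then show ?thesis using nz by (simp add: c_def)
  qed
  have rk: "ip (\<lambda>i. ?r i - c * ?y i) (a k) = 0" if "k \<in> K" for k
    using o1[OF that] by (simp add: ip_diff_left ip_scale_left)
  have "ip (\<lambda>i. ?r i - c * ?y i) (a x) = 0"
  proof -
    let ?z = "\<lambda>i. ?r i - c * ?y i"
    have "ip ?z (a x) = ip (a x) ?z" by (rule ip_comm)
    also have "\<dots> = ip ?y ?z + (\<Sum>k\<in>K. \<gamma> k * ip (a k) ?z)" by (rule ax)
    also have "ip ?y ?z = 0" using ry by (simp add: ip_comm)
    also have "(\<Sum>k\<in>K. \<gamma> k * ip (a k) ?z) = 0"
      using rk by (simp add: ip_comm[of "a _"])
    finally show ?thesis by simp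
  qed
  then show "projc v (insert x K) \<beta>'"
    unfolding projc_def eq using rk by auto
qed

lemma proj_exists: "finite K \<Longrightarrow> \<exists>\<beta>. projc v K \<beta>"
proof (induction K arbitrary: v rule: finite_induct)
  case empty
  then show ?case by (simp add: projc_def)
next
  case (insert x K)
  obtain \<beta> where pb: "projc v K \<beta>" using insert by blast
  obtain \<gamma> where pg: "projc (a x) K \<gamma>" using insert by blast
  show ?case
  proof (cases "nrm2 (res (a x) K \<gamma>) = 0")
    case False
    show ?thesis using proj_insert(2)[OF insert(1,2) pb pg False] by blast
  next
    case True
    let ?b = "\<beta>(x := 0)"
    have s: "(\<Sum>k\<in>K. ?b k * a k i) = (\<Sum>k\<in>K. \<beta> k * a k i)" for i
      using insert(2) by (intro sum.cong) auto
    have req: "res v (insert x K) ?b = res v K \<beta>"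
      unfolding res_def
    proof
      fix i
      show "v i - (\<Sum>k\<in>insert x K. ?b k * a k i) = v i - (\<Sum>k\<in>K. \<beta> k * a k i)"
        by (simp only: sum.insert[OF insert(1,2)] s) simp
    qed
    have ax: "ip (a x) w = ip (res (a x) K \<gamma>) w + (\<Sum>k\<in>K. \<gamma> k * ip (a k) w)" for w
      by (simp add: ip_res_left)
    have "ip (res v K \<beta>) (a k) = 0" if "k \<in> K" for k using pb that by (auto simp: projc_def)
    then have "ip (a x) (res v K \<beta>) = 0"
      using ax[of "res v K \<beta>"] ip_zero_left[OF True]
      by (simp add: ip_comm[of "a _"])
    then have "projc v (insert x K) ?b"
      using pb by (auto simp: projc_def req ip_comm)
    then show ?thesis by blast
  qed
qed

lemma pyth:
  assumes "projc v K \<beta>"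
  shows "nrm2 (res v K \<beta>') = nrm2 (res v K \<beta>) + nrm2 (\<lambda>i. \<Sum>k\<in>K. (\<beta> k - \<beta>' k) * a k i)"
proof -
  let ?d = "\<lambda>i. \<Sum>k\<in>K. (\<beta> k - \<beta>' k) * a k i"
  have "res v K \<beta>' = (\<lambda>i. res v K \<beta> i + ?d i)"
    by (auto simp: res_def left_diff_distrib sum_subtractf)
  moreover have "ip (res v K \<beta>) ?d = 0"
  proof -
    have "ip ?d (res v K \<beta>) = (\<Sum>k\<in>K. ip (\<lambda>i. (\<beta> k - \<beta>' k) * a k i) (res v K \<beta>))"
      by (rule ip_sum_left)
    also have "\<dots> = (\<Sum>k\<in>K. (\<beta> k - \<beta>' k) * ip (res v K \<beta>) (a k))"
      by (simp add: ip_scale_left ip_comm)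
    also have "\<dots> = 0" using assms by (simp add: projc_def)
    finally show ?thesis by (simp add: ip_comm)
  qed
  ultimately show ?thesis by (simp add: nrm2_add)
qed

lemma dist2_eq: "finite K \<Longrightarrow> projc v K \<beta> \<Longrightarrow> dist2 v K = nrm2 (res v K \<beta>)"
proof -
  assume K: "finite K" and p: "projc v K \<beta>"
  let ?b = "SOME \<beta>. projc v K \<beta>"
  have p0: "projc v K ?b" using proj_exists[OF K] by (metis someI_ex)
  have "nrm2 (res v K \<beta>) \<ge> nrm2 (res v K ?b)"
    using pyth[OF p0, of \<beta>] nrm2_nonneg[of "\<lambda>i. \<Sum>k\<in>K. (?b k - \<beta> k) * a k i"] by linarith
  moreover have "nrm2 (res v K \<beta>) \<le> nrm2 (res v K ?b)"
    using pyth[OF p, of ?b] nrm2_nonneg[of "\<lambda>i. \<Sum>k\<in>K. (\<beta> k - ?b k) * a k i"] by linarith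
  ultimately show ?thesis by (simp add: dist2_def)
qed

lemma dist2_proj: "finite K \<Longrightarrow> \<exists>\<beta>. projc v K \<beta> \<and> dist2 v K = nrm2 (res v K \<beta>)"
  using proj_exists dist2_eq by blast

lemma dist2_le: "finite K \<Longrightarrow> dist2 v K \<le> nrm2 (res v K \<beta>)"
  using dist2_proj pyth nrm2_nonneg by (metis le_add_same_cancel1)

lemma dist2_nonneg: "dist2 v K \<ge> 0"
  by (simp add: dist2_def nrm2_nonneg)

lemma dist2_mono:
  assumes "finite K'" "K \<subseteq> K'"
  shows "dist2 v K' \<le> dist2 v K"
proof -
  have fK: "finite K" using assms finite_subset by blast
  obtain \<beta> where "projc v K \<beta>" "dist2 v K = nrm2 (res v K \<beta>)" using dist2_proj[OF fK] by blast
  let ?b = "\<lambda>l. if l \<in> K then \<beta> l else 0"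
  have "(\<Sum>k\<in>K'. ?b k * a k i) = (\<Sum>k\<in>K. \<beta> k * a k i)" for i
  proof -
    have "(\<Sum>k\<in>K'. ?b k * a k i) = (\<Sum>k\<in>K'. if k \<in> K then \<beta> k * a k i else 0)"
      by (rule sum.cong) auto
    also have "\<dots> = (\<Sum>k\<in>K' \<inter> K. \<beta> k * a k i)"
      using assms(1) by (simp add: sum.inter_restrict)
    finally show ?thesis using assms(2) by (simp add: Int_absorb1)
  qed
  then have "res v K' ?b = res v K \<beta>" by (simp add: res_def)
  then show ?thesis using dist2_le[OF assms(1), of v ?b] \<open>dist2 v K = _\<close> by simp
qed

lemma dist2_self: "finite K \<Longrightarrow> x \<in> K \<Longrightarrow> dist2 (a x) K = 0"
proof -
  assume K: "finite K" "x \<in> K"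
  let ?b = "\<lambda>l. if l = x then 1 else (0::real)"
  have "(\<Sum>k\<in>K. ?b k * a k i) = a x i" for i
  proof -
    have "(\<Sum>k\<in>K. ?b k * a k i) = (\<Sum>k\<in>K. if k = x then a k i else 0)"
      by (rule sum.cong) auto
    then show ?thesis using K by simp
  qed
  then have "nrm2 (res (a x) K ?b) = 0" by (simp add: res_def nrm2_def)
  then show ?thesis using dist2_le[OF K(1), of "a x" ?b] dist2_nonneg[of "a x" K] by linarith
qed

lemma nrm2_scale: "nrm2 (\<lambda>i. c * u i) = c\<^sup>2 * nrm2 u"
  by (simp add: nrm2_def power_mult_distrib sum_distrib_left)

lemma gram2:
  assumes K: "finite K" and pg: "projc (a x) K \<gamma>" and pb: "projc (a y) K \<beta>"
  shows "nrm2 (res (a x) K \<gamma>) * dist2 (a y) (insert x K)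
       = nrm2 (res (a x) K \<gamma>) * nrm2 (res (a y) K \<beta>) - (ip (res (a x) K \<gamma>) (res (a y) K \<beta>))\<^sup>2"
proof (cases "nrm2 (res (a x) K \<gamma>) = 0")
  case True
  then show ?thesis by (simp add: ip_zero_left)
next
  case False
  let ?x = "res (a x) K \<gamma>" and ?y = "res (a y) K \<beta>"
  have xK: "x \<notin> K"
  proof
    assume "x \<in> K"
    then have "dist2 (a x) K = 0" using dist2_self K by blast
    then show False using dist2_eq[OF K pg] False by simp
  qed
  define c where "c = ip ?y ?x / nrm2 ?x"
  note pi = proj_insert[OF K xK pb pg False]
  have "dist2 (a y) (insert x K) = nrm2 (\<lambda>i. ?y i - c * ?x i)"
    using dist2_eq[OF _ pi(2)] pi(1) K by (simp add: c_def)
  also have "\<dots> = nrm2 ?y - 2 * (c * ip ?y ?x) + c\<^sup>2 * nrm2 ?x"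
    by (simp add: nrm2_diff nrm2_scale ip_comm[of ?y] ip_scale_left)
  finally have d: "dist2 (a y) (insert x K) = nrm2 ?y - 2 * (c * ip ?y ?x) + c\<^sup>2 * nrm2 ?x" .
  show ?thesis unfolding d c_def using False
    by (simp add: field_simps power2_eq_square ip_comm[of ?y])
qed

lemma swap2:
  assumes K: "finite K"
  shows "dist2 (a x) K * dist2 (a y) (insert x K) = dist2 (a y) K * dist2 (a x) (insert y K)"
proof -
  obtain \<gamma> where pg: "projc (a x) K \<gamma>" using proj_exists[OF K] by blast
  obtain \<beta> where pb: "projc (a y) K \<beta>" using proj_exists[OF K] by blast
  show ?thesis
    using gram2[OF K pg pb] gram2[OF K pb pg] dist2_eq[OF K pg] dist2_eq[OF K pb]
    by (simp add: ip_comm[of "res (a x) K \<gamma>"] mult.commute)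
qed

fun dl :: "nat set \<Rightarrow> nat list \<Rightarrow> real list" where
  "dl V [] = []"
| "dl V (x # xs) = dist2 (a x) V # dl (insert x V) xs"

lemma dl_append: "dl V (u @ w) = dl V u @ dl (V \<union> set u) w"
  by (induction u arbitrary: V) (auto simp: insert_commute)

lemma length_dl: "length (dl V u) = length u"
  by (induction u arbitrary: V) auto

lemma dl_swap: "finite V \<Longrightarrow> prod_list (dl V (x # y # w)) = prod_list (dl V (y # x # w))"
  using swap2[of V x y] by (simp add: insert_commute mult.assoc[symmetric])

lemma dl_move: "finite V \<Longrightarrow> prod_list (dl V (j # v)) = prod_list (dl V (v @ [j]))"
proof (induction v arbitrary: V)
  case Nil
  then show ?case by simp
next
  case (Cons y v)
  have "prod_list (dl V (j # y # v)) = prod_list (dl V (y # j # v))"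
    using dl_swap[OF Cons.prems] .
  also have "\<dots> = dist2 (a y) V * prod_list (dl (insert y V) (j # v))" by simp
  also have "\<dots> = dist2 (a y) V * prod_list (dl (insert y V) (v @ [j]))"
    using Cons by simp
  finally show ?case by simp
qed

lemma dl_nonneg: "\<forall>t\<in>set (dl V u). t \<ge> 0"
  by (induction u arbitrary: V) (auto simp: dist2_nonneg)

lemma dl_mono_one:
  "finite W \<Longrightarrow> \<forall>t\<in>set (dl (insert j W) v). 1 \<le> t \<Longrightarrow> \<forall>t\<in>set (dl W v). 1 \<le> t"
proof (induction v arbitrary: W)
  case Nil
  then show ?case by simp
next
  case (Cons y v)
  have "dist2 (a y) (insert j W) \<le> dist2 (a y) W"
    using Cons.prems(1) by (intro dist2_mono) auto
  moreover have "\<forall>t\<in>set (dl (insert y W) v). 1 \<le> t"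
    using Cons.prems Cons.IH[of "insert y W"] by (simp add: insert_commute)
  ultimately show ?case using Cons.prems by auto
qed

end


fun topo :: "(nat \<times> nat) set \<Rightarrow> nat set \<Rightarrow> nat list \<Rightarrow> bool" where
  "topo R V [] = True"
| "topo R V (x # xs) = (pa R x \<subseteq> V \<and> topo R (insert x V) xs)"

lemma topo_append: "topo R V (u @ w) = (topo R V u \<and> topo R (V \<union> set u) w)"
  by (induction u arbitrary: V) (auto simp: insert_commute)

lemma topo_mono: "topo R V w \<Longrightarrow> V \<subseteq> W \<Longrightarrow> topo R W w"
proof (induction w arbitrary: V W)
  case (Cons x w)
  then show ?case using Cons.IH[of "insert x V" "insert x W"] by auto
qed simp

lemma topo_exists:
  "finite T \<Longrightarrow> wf R \<Longrightarrow> \<forall>x\<in>T. pa R x \<subseteq> V \<union> T \<Longrightarrow> \<exists>\<pi>. distinct \<pi> \<and> set \<pi> = T \<and> topo R V \<pi>"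
proof (induction "card T" arbitrary: T V rule: less_induct)
  case less
  show ?case
  proof (cases "T = {}")
    case True
    then show ?thesis by auto
  next
    case False
    then obtain x0 where "x0 \<in> T" by blast
    obtain x where xT: "x \<in> T" and mn: "\<And>y. (y, x) \<in> R \<Longrightarrow> y \<notin> T"
      using wfE_min[OF less.prems(2) \<open>x0 \<in> T\<close>] by blast
    have px: "pa R x \<subseteq> V" using less.prems(3) xT mn by (auto simp: pa_def)
    have "card (T - {x}) < card T" using xT less.prems(1) by (meson card_Diff1_less)
    moreover have "\<forall>z\<in>T - {x}. pa R z \<subseteq> insert x V \<union> (T - {x})" using less.prems(3) by auto
    ultimately obtain \<pi> where "distinct \<pi>" "set \<pi> = T - {x}" "topo R (insert x V) \<pi>"
      using less.hyps[of "T - {x}" "insert x V"] less.prems by auto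
    then show ?thesis using px xT by (intro exI[of _ "x # \<pi>"]) auto
  qed
qed

lemma prod_list_pos: "\<forall>t\<in>set ts. (t::real) > 0 \<Longrightarrow> prod_list ts > 0"
  by (induction ts) auto

lemma ln_sum_list:
  "\<forall>t\<in>set ts. (t::real) > 0 \<Longrightarrow>
   sum_list ts - length ts - ln (prod_list ts) = sum_list (map (\<lambda>t. t - 1 - ln t) ts)"
proof (induction ts)
  case Nil
  then show ?case by simp
next
  case (Cons x ts)
  have "ln (prod_list (x # ts)) = ln x + ln (prod_list ts)"
    using Cons.prems prod_list_pos[of ts] by (simp add: ln_mult)
  then show ?case using Cons by simp
qed

lemma amgm_list:
  assumes pos: "\<forall>t\<in>set ts. (t::real) > 0" and pr: "prod_list ts = 1"
  shows "real (length ts) \<le> sum_list ts" and "sum_list ts = real (length ts) \<Longrightarrow> \<forall>t\<in>set ts. t = 1"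
proof -
  have e: "sum_list ts - length ts = sum_list (map (\<lambda>t. t - 1 - ln t) ts)"
    using ln_sum_list[OF pos] pr by simp
  have nn: "\<forall>u\<in>set (map (\<lambda>t. t - 1 - ln t) ts). u \<ge> 0"
    using pos ln_le_minus_one by fastforce
  then have "sum_list (map (\<lambda>t. t - 1 - ln t) ts) \<ge> 0" using sum_list_nonneg by blast
  then show "real (length ts) \<le> sum_list ts" using e by simp
  assume "sum_list ts = real (length ts)"
  then have "sum_list (map (\<lambda>t. t - 1 - ln t) ts) = 0" using e by simp
  then have "\<forall>u\<in>set (map (\<lambda>t. t - 1 - ln t) ts). u = 0"
    using sum_list_nonneg_eq_0_iff[of "map (\<lambda>t. t - 1 - ln t) ts"] nn by blast
  then show "\<forall>t\<in>set ts. t = 1" using pos ln_eq_minus_one by fastforce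
qed

lemma prod_list_ge1: "\<forall>t\<in>set ts. (1::real) \<le> t \<Longrightarrow> 1 \<le> prod_list ts"
  by (induction ts) (auto intro: order_trans[OF _ mult_mono, of 1 1 1, simplified])

lemma prod_list_one:
  "\<forall>t\<in>set ts. (1::real) \<le> t \<Longrightarrow> prod_list ts = 1 \<Longrightarrow> \<forall>t\<in>set ts. t = 1"
proof (induction ts)
  case Nil
  then show ?case by simp
next
  case (Cons x ts)
  have x1: "1 \<le> x" and p1: "1 \<le> prod_list ts" using Cons.prems prod_list_ge1[of ts] by auto
  have xp: "x * prod_list ts = 1" using Cons.prems by simp
  have "x \<le> x * prod_list ts" using x1 p1 by (simp add: mult_le_cancel_left1)
  then have "x = 1" using x1 xp by simp
  then show ?case using Cons xp by simp
qed



lemma sum_restrict: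
  "finite L \<Longrightarrow> P \<subseteq> L \<Longrightarrow> (\<Sum>k\<in>L. (if k \<in> P then f k else 0) * (g k::real)) = (\<Sum>k\<in>P. f k * g k)"
proof -
  assume L: "finite L" "P \<subseteq> L"
  have "(\<Sum>k\<in>L. (if k \<in> P then f k else 0) * g k) = (\<Sum>k\<in>L. if k \<in> P then f k * g k else 0)"
    by (rule sum.cong) auto
  also have "\<dots> = (\<Sum>k\<in>L \<inter> P. f k * g k)" using L(1) by (simp add: sum.inter_restrict)
  finally show ?thesis using L(2) by (simp add: Int_absorb1)
qed

locale sem = lin +
  fixes Es :: "(nat \<times> nat) set" and B :: "nat \<Rightarrow> nat \<Rightarrow> real"
  assumes Es_sub: "Es \<subseteq> I \<times> I" and acyc: "acyclic Es"
    and rel: "\<And>j i. j \<in> I \<Longrightarrow> i \<in> I \<Longrightarrow> a j i = (if i = j then 1 else 0) + (\<Sum>k\<in>pa Es j. B k j * a k i)"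
    and Bnz: "\<And>k j. (k, j) \<in> Es \<Longrightarrow> B k j \<noteq> 0"
begin

lemma finEs: "finite Es"
  using finite_subset[OF Es_sub] finI by blast

lemma wfEs: "wf Es" using finite_acyclic_wf[OF finEs acyc] .
lemma wfEsc: "wf (Es\<inverse>)" using finite_acyclic_wf_converse[OF finEs acyc] .

lemma pa_sub: "pa Es j \<subseteq> I" using Es_sub by (auto simp: pa_def)
lemma pa_fin: "finite (pa Es j)" using pa_sub finI finite_subset by blast
lemma pa_irr: "j \<notin> pa Es j"
  using acyc by (auto simp: pa_def acyclic_def)

lemma anc0: "\<forall>i\<in>I. (i, j) \<notin> Es\<^sup>* \<longrightarrow> j \<in> I \<longrightarrow> a j i = 0"
proof (induction j rule: wf_induct_rule[OF wfEs])
  case (1 j)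
  show ?case
  proof (intro ballI impI)
    fix i assume i: "i \<in> I" and nr: "(i, j) \<notin> Es\<^sup>*" and j: "j \<in> I"
    have ij: "i \<noteq> j" using nr by auto
    have z: "a k i = 0" if "k \<in> pa Es j" for k
    proof -
      have kj: "(k, j) \<in> Es" using that by (simp add: pa_def)
      have ik: "(i, k) \<notin> Es\<^sup>*"
      proof
        assume "(i, k) \<in> Es\<^sup>*"
        from rtrancl_into_rtrancl[OF this kj] nr show False by simp
      qed
      have kI: "k \<in> I" using pa_sub that by blast
      from 1[OF kj] i ik kI show ?thesis by simp
    qed
    have "(\<Sum>k\<in>pa Es j. B k j * a k i) = 0" using z by simp
    then show "a j i = 0" using rel[OF j i] ij by simp
  qed
qed

lemma diag1: "j \<in> I \<Longrightarrow> a j j = 1"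
proof -
  assume j: "j \<in> I"
  have "a k j = 0" if "k \<in> pa Es j" for k
  proof -
    have kj: "(k, j) \<in> Es" using that by (simp add: pa_def)
    have "(j, k) \<notin> Es\<^sup>*"
    proof
      assume "(j, k) \<in> Es\<^sup>*"
      then have "(j, j) \<in> Es\<^sup>+" using kj by (meson rtrancl_into_trancl1)
      then show False using acyc by (simp add: acyclic_def)
    qed
    moreover have "k \<in> I" using pa_sub that by blast
    ultimately show ?thesis using anc0[of k] j by simp
  qed
  then have "(\<Sum>k\<in>pa Es j. B k j * a k j) = 0" by simp
  then show ?thesis using rel[OF j j] by simp
qed

lemma linind:
  assumes K: "K \<subseteq> I" and z: "\<forall>i\<in>I. (\<Sum>k\<in>K. c k * a k i) = 0" and kK: "k \<in> K"
  shows "c k = 0"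
proof (rule ccontr)
  assume "c k \<noteq> 0"
  let ?Z = "{k\<in>K. c k \<noteq> 0}"
  have "k \<in> ?Z" using kK \<open>c k \<noteq> 0\<close> by simp
  have wft: "wf ((Es\<inverse>)\<^sup>+)" using wf_trancl[OF wfEsc] .
  obtain m where mZ: "m \<in> ?Z" and mn: "\<And>y. (y, m) \<in> (Es\<inverse>)\<^sup>+ \<Longrightarrow> y \<notin> ?Z"
    using wfE_min[OF wft \<open>k \<in> ?Z\<close>] by blast
  have mI: "m \<in> I" using mZ K by blast
  have fK: "finite K" using K finI finite_subset by blast
  have r0: "c l * a l m = 0" if "l \<in> K - {m}" for l
  proof (cases "c l = 0")
    case False
    then have "(l, m) \<notin> (Es\<inverse>)\<^sup>+" using mn that by blast
    then have "(m, l) \<notin> Es\<^sup>+" by (simp add: trancl_converse)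
    moreover have "l \<noteq> m" using that by blast
    ultimately have "(m, l) \<notin> Es\<^sup>*" by (auto simp: rtrancl_eq_or_trancl)
    then show ?thesis using anc0[of l] mI K that by auto
  qed simp
  have "(\<Sum>k\<in>K. c k * a k m) = c m * a m m + (\<Sum>l\<in>K - {m}. c l * a l m)"
    using mZ by (intro sum.remove[OF fK]) simp
  also have "(\<Sum>l\<in>K - {m}. c l * a l m) = 0" using r0 by (intro sum.neutral) blast
  also have "c m * a m m = c m" using diag1[OF mI] by simp
  finally show False using z mI mZ by simp
qed

definition closed :: "nat set \<Rightarrow> bool" where
  "closed S \<longleftrightarrow> S \<subseteq> I \<and> (\<forall>j\<in>S. pa Es j \<subseteq> S)"

lemma sink_exists: "S \<noteq> {} \<Longrightarrow> \<exists>j\<in>S. \<forall>l\<in>S. (j, l) \<notin> Es"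
proof -
  assume "S \<noteq> {}" then obtain x where "x \<in> S" by blast
  obtain z where "z \<in> S" and "\<And>y. (y, z) \<in> Es\<inverse> \<Longrightarrow> y \<notin> S"
    using wfE_min[OF wfEsc \<open>x \<in> S\<close>] by metis
  then show ?thesis by auto
qed

lemma anc_closed: "closed S \<Longrightarrow> (c, k) \<in> Es\<^sup>* \<Longrightarrow> k \<in> S \<Longrightarrow> c \<in> S"
proof -
  assume cl: "closed S" and ck: "(c, k) \<in> Es\<^sup>*" and k: "k \<in> S"
  from ck show "c \<in> S"
  proof (induction rule: converse_rtrancl_induct)
    case base then show ?case using k .
  next
    case (step y z)
    then show ?case using cl by (auto simp: closed_def pa_def)
  qed
qed

lemma closed_remove: "closed S \<Longrightarrow> \<forall>l\<in>S. (j, l) \<notin> Es \<Longrightarrow> closed (S - {j})"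
  by (auto simp: closed_def pa_def)

lemma sink_orth:
  assumes cl: "closed S" and j: "j \<in> S" and sk: "\<forall>l\<in>S. (j, l) \<notin> Es" and k: "k \<in> S" "k \<noteq> j"
  shows "a k j = 0"
proof -
  have "(j, k) \<notin> Es\<^sup>*"
  proof
    assume "(j, k) \<in> Es\<^sup>*"
    then have "(j, k) \<in> Es\<^sup>+" using k(2) by (auto simp: rtrancl_eq_or_trancl)
    then obtain c where "(j, c) \<in> Es" "(c, k) \<in> Es\<^sup>*" by (meson tranclD)
    then show False using anc_closed[OF cl _ k(1)] sk by blast
  qed
  then show ?thesis using anc0[of k] cl j k by (auto simp: closed_def)
qed

lemma sink_nrm:
  assumes cl: "closed S" and j: "j \<in> S" and sk: "\<forall>l\<in>S. (j, l) \<notin> Es" and K: "K \<subseteq> S - {j}"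
  shows "nrm2 (res (a j) K \<beta>) = 1 + nrm2 (\<lambda>i. (\<Sum>k\<in>pa Es j. B k j * a k i) - (\<Sum>k\<in>K. \<beta> k * a k i))"
proof -
  let ?w = "\<lambda>i. (\<Sum>k\<in>pa Es j. B k j * a k i) - (\<Sum>k\<in>K. \<beta> k * a k i)"
  let ?e = "\<lambda>i. if i = j then 1 else (0::real)"
  have jI: "j \<in> I" using cl j by (auto simp: closed_def)
  have "nrm2 (res (a j) K \<beta>) = nrm2 (\<lambda>i. ?e i + ?w i)"
    by (rule nrm2_cong) (simp add: res_def rel[OF jI])
  also have "\<dots> = nrm2 ?e + 2 * ip ?e ?w + nrm2 ?w" by (rule nrm2_add)
  also have "nrm2 ?e = 1"
  proof -
    have "nrm2 ?e = (\<Sum>i\<in>I. if i = j then 1 else 0)"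
      unfolding nrm2_def by (rule sum.cong) auto
    then show ?thesis using jI finI by simp
  qed
  also have "ip ?e ?w = ?w j"
  proof -
    have "ip ?e ?w = (\<Sum>i\<in>I. if i = j then ?w i else 0)"
      unfolding ip_def by (rule sum.cong) auto
    then show ?thesis using jI finI by simp
  qed
  also have "?w j = 0"
  proof -
    have paS: "pa Es j \<subseteq> S - {j}" using cl j pa_irr by (auto simp: closed_def)
    have z: "a k j = 0" if "k \<in> S - {j}" for k using sink_orth[OF cl j sk] that by blast
    have "(\<Sum>k\<in>pa Es j. B k j * a k j) = 0" using z paS by (intro sum.neutral) auto
    moreover have "(\<Sum>k\<in>K. \<beta> k * a k j) = 0" using z K by (intro sum.neutral) auto
    ultimately have "(\<Sum>k\<in>pa Es j. B k j * a k j) = 0" "(\<Sum>k\<in>K. \<beta> k * a k j) = 0"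
      by blast+
    then show ?thesis by simp
  qed
  finally show ?thesis by simp
qed

lemma sink_dist:
  assumes cl: "closed S" and j: "j \<in> S" and sk: "\<forall>l\<in>S. (j, l) \<notin> Es"
  shows "dist2 (a j) (S - {j}) = 1"
proof -
  have fS: "finite (S - {j})" using cl finI finite_subset by (auto simp: closed_def)
  let ?b = "\<lambda>k. if k \<in> pa Es j then B k j else 0"
  have paS: "pa Es j \<subseteq> S - {j}" using cl j pa_irr by (auto simp: closed_def)
  have "(\<Sum>k\<in>S - {j}. ?b k * a k i) = (\<Sum>k\<in>pa Es j. B k j * a k i)" for i
    using sum_restrict[OF fS paS] .
  then have "nrm2 (res (a j) (S - {j}) ?b) = 1"
    using sink_nrm[OF cl j sk order_refl, of ?b] by (simp add: nrm2_def)
  then have le: "dist2 (a j) (S - {j}) \<le> 1" using dist2_le[OF fS] by metis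
  obtain \<beta> where "dist2 (a j) (S - {j}) = nrm2 (res (a j) (S - {j}) \<beta>)"
    using dist2_proj[OF fS] by blast
  then have "dist2 (a j) (S - {j}) \<ge> 1"
    using sink_nrm[OF cl j sk order_refl, of \<beta>] nrm2_nonneg by simp
  then show ?thesis using le by simp
qed

lemma sink_parents:
  assumes cl: "closed S" and j: "j \<in> S" and sk: "\<forall>l\<in>S. (j, l) \<notin> Es" and K: "K \<subseteq> S - {j}"
    and d: "dist2 (a j) K = 1"
  shows "pa Es j \<subseteq> K"
proof
  fix k0 assume k0: "k0 \<in> pa Es j"
  have "K \<subseteq> I" using K cl by (auto simp: closed_def)
  then have fK: "finite K" using finI finite_subset by blast
  obtain \<beta> where "dist2 (a j) K = nrm2 (res (a j) K \<beta>)" using dist2_proj[OF fK] by blast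
  then have "nrm2 (\<lambda>i. (\<Sum>k\<in>pa Es j. B k j * a k i) - (\<Sum>k\<in>K. \<beta> k * a k i)) = 0"
    using sink_nrm[OF cl j sk K, of \<beta>] d by simp
  then have w0: "\<forall>i\<in>I. (\<Sum>k\<in>pa Es j. B k j * a k i) - (\<Sum>k\<in>K. \<beta> k * a k i) = 0"
    by (simp add: nrm2_zero_iff)
  let ?L = "pa Es j \<union> K"
  let ?c = "\<lambda>k. (if k \<in> pa Es j then B k j else 0) - (if k \<in> K then \<beta> k else 0)"
  have fL: "finite ?L" using fK pa_fin by simp
  have "(\<Sum>k\<in>?L. ?c k * a k i) = (\<Sum>k\<in>pa Es j. B k j * a k i) - (\<Sum>k\<in>K. \<beta> k * a k i)" for i
    using sum_restrict[OF fL, of "pa Es j" "\<lambda>k. B k j" "\<lambda>k. a k i"]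
      sum_restrict[OF fL, of K \<beta> "\<lambda>k. a k i"]
    by (simp add: left_diff_distrib sum_subtractf)
  then have "\<forall>i\<in>I. (\<Sum>k\<in>?L. ?c k * a k i) = 0" using w0 by simp
  moreover have "?L \<subseteq> I" using pa_sub K cl by (auto simp: closed_def)
  ultimately have "?c k0 = 0" using linind[of ?L ?c k0] k0 by blast
  then show "k0 \<in> K" using k0 Bnz by (auto simp: pa_def split: if_splits)
qed


lemma nrm2_unit: "j \<in> I \<Longrightarrow> nrm2 (\<lambda>i. if i = j then 1 else 0) = 1"
proof -
  assume jI: "j \<in> I"
  have "nrm2 (\<lambda>i. if i = j then 1 else (0::real)) = (\<Sum>i\<in>I. if i = j then 1 else 0)"
    unfolding nrm2_def by (rule sum.cong) auto
  then show ?thesis using jI finI by simp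
qed

lemma PT: "closed S \<Longrightarrow> distinct \<pi> \<Longrightarrow> set \<pi> = S \<Longrightarrow> prod_list (dl {} \<pi>) = 1"
proof (induction "length \<pi>" arbitrary: \<pi> S rule: less_induct)
  case less
  show ?case
  proof (cases "S = {}")
    case True then show ?thesis using less.prems by simp
  next
    case False
    obtain j where j: "j \<in> S" and sk: "\<forall>l\<in>S. (j, l) \<notin> Es" using sink_exists[OF False] by blast
    obtain u v where \<pi>: "\<pi> = u @ j # v" using split_list j less.prems(3) by metis
    have cl': "closed (S - {j})" using closed_remove[OF less.prems(1) sk] .
    have d': "distinct (u @ v)" using less.prems(2) \<pi> by simp
    have s': "set (u @ v) = S - {j}" using less.prems(2,3) \<pi> by auto
    have "length (u @ v) < length \<pi>" using \<pi> by simp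
    then have IH: "prod_list (dl {} (u @ v)) = 1" using less.hyps cl' d' s' by blast
    have "prod_list (dl {} \<pi>) = prod_list (dl {} u) * prod_list (dl (set u) (j # v))"
      by (simp add: \<pi> dl_append)
    also have "prod_list (dl (set u) (j # v)) = prod_list (dl (set u) (v @ [j]))" by (rule dl_move) simp
    also have "\<dots> = prod_list (dl (set u) v) * dist2 (a j) (set u \<union> set v)" by (simp add: dl_append)
    also have "set u \<union> set v = S - {j}" using s' by simp
    also have "dist2 (a j) (S - {j}) = 1" by (rule sink_dist[OF less.prems(1) j sk])
    finally show ?thesis using IH by (simp add: dl_append)
  qed
qed

lemma ET: "closed S \<Longrightarrow> distinct \<pi> \<Longrightarrow> set \<pi> = S \<Longrightarrow> \<forall>t\<in>set (dl {} \<pi>). t = 1 \<Longrightarrow> topo Es {} \<pi>"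
proof (induction "length \<pi>" arbitrary: \<pi> S rule: less_induct)
  case less
  show ?case
  proof (cases "S = {}")
    case True then show ?thesis using less.prems by simp
  next
    case False
    obtain j where j: "j \<in> S" and sk: "\<forall>l\<in>S. (j, l) \<notin> Es" using sink_exists[OF False] by blast
    obtain u v where \<pi>: "\<pi> = u @ j # v" using split_list j less.prems(3) by metis
    have cl': "closed (S - {j})" using closed_remove[OF less.prems(1) sk] .
    have d': "distinct (u @ v)" using less.prems(2) \<pi> by simp
    have s': "set (u @ v) = S - {j}" using less.prems(2,3) \<pi> by auto
    have all: "\<forall>t\<in>set (dl {} u @ dist2 (a j) (set u) # dl (insert j (set u)) v). t = 1"
      using less.prems(4) by (simp add: \<pi> dl_append)
    then have h1: "\<forall>t\<in>set (dl {} u). t = 1" and h2: "dist2 (a j) (set u) = 1"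
      and h3: "\<forall>t\<in>set (dl (insert j (set u)) v). t = 1" by auto
    have "\<forall>t\<in>set (dl (set u) v). 1 \<le> t" using dl_mono_one[of "set u" j v] h3 by force
    then have ge: "\<forall>t\<in>set (dl {} (u @ v)). 1 \<le> t" using h1 by (auto simp: dl_append)
    have "prod_list (dl {} (u @ v)) = 1" using PT[OF cl' d' s'] .
    then have "\<forall>t\<in>set (dl {} (u @ v)). t = 1" using prod_list_one ge by blast
    moreover have "length (u @ v) < length \<pi>" using \<pi> by simp
    ultimately have IH: "topo Es {} (u @ v)" using less.hyps cl' d' s' by blast
    then have t1: "topo Es {} u" and t2: "topo Es (set u) v" by (auto simp: topo_append)
    have "set u \<subseteq> S - {j}" using s' by auto
    then have pj: "pa Es j \<subseteq> set u" using sink_parents[OF less.prems(1) j sk _ h2] by blast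
    have "topo Es (insert j (set u)) v" using topo_mono[OF t2] by blast
    then show ?thesis using t1 pj by (simp add: \<pi> topo_append)
  qed
qed

lemma SN:
  assumes x: "x \<in> I" and V: "finite V" "V \<subseteq> I" and pE: "pa E x \<subseteq> V" and pS: "pa Es x \<subseteq> V"
    and d1: "dist2 (a x) V = 1" and d2: "dist2 (a x) (pa E x) = 1"
  shows "pa Es x \<subseteq> pa E x"
proof
  fix k0 assume k0: "k0 \<in> pa Es x"
  have fE: "finite (pa E x)" using V pE finite_subset by blast
  obtain \<beta>0 where p0: "projc (a x) V \<beta>0" and n0: "dist2 (a x) V = nrm2 (res (a x) V \<beta>0)"
    using dist2_proj[OF V(1)] by blast
  let ?bc = "\<lambda>k. if k \<in> pa Es x then B k x else 0"
  have sc: "(\<Sum>k\<in>V. ?bc k * a k i) = (\<Sum>k\<in>pa Es x. B k x * a k i)" for i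
    using sum_restrict[OF V(1) pS] .
  have "nrm2 (res (a x) V ?bc) = nrm2 (\<lambda>i. if i = x then 1 else 0)"
    by (rule nrm2_cong) (simp add: res_def sc rel[OF x])
  then have rc: "nrm2 (res (a x) V ?bc) = 1" using nrm2_unit[OF x] by simp
  have "nrm2 (\<lambda>i. \<Sum>k\<in>V. (\<beta>0 k - ?bc k) * a k i) = 0"
    using pyth[OF p0, of ?bc] rc n0 d1 by simp
  then have z1: "\<forall>i\<in>I. (\<Sum>k\<in>V. (\<beta>0 k - ?bc k) * a k i) = 0" by (simp add: nrm2_zero_iff)
  obtain \<beta>E where nE: "dist2 (a x) (pa E x) = nrm2 (res (a x) (pa E x) \<beta>E)"
    using dist2_proj[OF fE] by blast
  let ?be = "\<lambda>k. if k \<in> pa E x then \<beta>E k else 0"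
  have se: "(\<Sum>k\<in>V. ?be k * a k i) = (\<Sum>k\<in>pa E x. \<beta>E k * a k i)" for i
    using sum_restrict[OF V(1) pE] .
  have "res (a x) V ?be = res (a x) (pa E x) \<beta>E" by (simp add: res_def se)
  then have "nrm2 (\<lambda>i. \<Sum>k\<in>V. (\<beta>0 k - ?be k) * a k i) = 0"
    using pyth[OF p0, of ?be] nE n0 d1 d2 by simp
  then have z2: "\<forall>i\<in>I. (\<Sum>k\<in>V. (\<beta>0 k - ?be k) * a k i) = 0" by (simp add: nrm2_zero_iff)
  have "(\<Sum>k\<in>V. (?be k - ?bc k) * a k i) =
        (\<Sum>k\<in>V. (\<beta>0 k - ?bc k) * a k i) - (\<Sum>k\<in>V. (\<beta>0 k - ?be k) * a k i)" for i
    unfolding sum_subtractf[symmetric] by (rule sum.cong) (auto simp: algebra_simps)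
  then have "\<forall>i\<in>I. (\<Sum>k\<in>V. (?be k - ?bc k) * a k i) = 0" using z1 z2 by simp
  then have "?be k0 - ?bc k0 = 0" using linind[OF V(2), of "\<lambda>k. ?be k - ?bc k" k0] k0 pS by blast
  moreover have "B k0 x \<noteq> 0" using k0 Bnz by (simp add: pa_def)
  ultimately show "k0 \<in> pa E x" using k0 by (auto split: if_splits)
qed

lemma SB: "topo E V \<pi> \<Longrightarrow> finite V \<Longrightarrow>
   sum_list (dl V \<pi>) \<le> sum_list (map (\<lambda>x. dist2 (a x) (pa E x)) \<pi>)"
proof (induction \<pi> arbitrary: V)
  case Nil then show ?case by simp
next
  case (Cons x xs)
  have "dist2 (a x) V \<le> dist2 (a x) (pa E x)" using Cons.prems by (intro dist2_mono) auto
  moreover have "sum_list (dl (insert x V) xs) \<le> sum_list (map (\<lambda>x. dist2 (a x) (pa E x)) xs)"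
    using Cons by simp
  ultimately show ?case by simp
qed

lemma SBeq: "topo E V \<pi> \<Longrightarrow> topo Es V \<pi> \<Longrightarrow> finite V \<Longrightarrow> V \<subseteq> I \<Longrightarrow> set \<pi> \<subseteq> I \<Longrightarrow>
   \<forall>t\<in>set (dl V \<pi>). t = 1 \<Longrightarrow>
   sum_list (dl V \<pi>) = sum_list (map (\<lambda>x. dist2 (a x) (pa E x)) \<pi>) \<Longrightarrow>
   \<forall>x\<in>set \<pi>. pa Es x \<subseteq> pa E x"
proof (induction \<pi> arbitrary: V)
  case Nil then show ?case by simp
next
  case (Cons x xs)
  have h: "dist2 (a x) V \<le> dist2 (a x) (pa E x)" using Cons.prems by (intro dist2_mono) auto
  have t: "sum_list (dl (insert x V) xs) \<le> sum_list (map (\<lambda>x. dist2 (a x) (pa E x)) xs)"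
    using SB Cons.prems by simp
  have e1: "dist2 (a x) V = dist2 (a x) (pa E x)"
    and e2: "sum_list (dl (insert x V) xs) = sum_list (map (\<lambda>x. dist2 (a x) (pa E x)) xs)"
    using h t Cons.prems(7) by simp_all
  have d1: "dist2 (a x) V = 1" using Cons.prems(6) by simp
  have "pa Es x \<subseteq> pa E x"
    using SN[of x V E] Cons.prems d1 e1 by simp
  moreover have "\<forall>y\<in>set xs. pa Es y \<subseteq> pa E y"
    using Cons.IH[of "insert x V"] Cons.prems e2 by simp
  ultimately show ?case by simp
qed

lemma lower:
  assumes E: "E \<subseteq> I \<times> I" "acyclic E"
  shows "real (card I) \<le> (\<Sum>j\<in>I. dist2 (a j) (pa E j))"
    and "(\<Sum>j\<in>I. dist2 (a j) (pa E j)) = real (card I) \<Longrightarrow> Es \<subseteq> E"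
proof -
  have fE: "finite E" using finite_subset[OF E(1)] finI by blast
  have wE: "wf E" using finite_acyclic_wf[OF fE E(2)] .
  have "\<forall>x\<in>I. pa E x \<subseteq> {} \<union> I" using E(1) by (auto simp: pa_def)
  then obtain \<pi> where d: "distinct \<pi>" and s: "set \<pi> = I" and tp: "topo E {} \<pi>"
    using topo_exists[OF finI wE] by blast
  have cl: "closed I" using pa_sub by (simp add: closed_def)
  have pr: "prod_list (dl {} \<pi>) = 1" using PT[OF cl d s] .
  have pos: "\<forall>t\<in>set (dl {} \<pi>). t > 0"
  proof
    fix t assume t: "t \<in> set (dl {} \<pi>)"
    have "t \<ge> 0" using dl_nonneg t by blast
    moreover have "t \<noteq> 0" using t pr prod_list_zero_iff[of "dl {} \<pi>"] by auto
    ultimately show "t > 0" by simp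
  qed
  have len: "real (length (dl {} \<pi>)) = real (card I)"
    using distinct_card[OF d] s by (simp add: length_dl)
  have sumeq: "(\<Sum>j\<in>I. dist2 (a j) (pa E j)) = sum_list (map (\<lambda>x. dist2 (a x) (pa E x)) \<pi>)"
    using sum_list_distinct_conv_sum_set[OF d, of "\<lambda>x. dist2 (a x) (pa E x)"] s by simp
  have sb: "sum_list (dl {} \<pi>) \<le> sum_list (map (\<lambda>x. dist2 (a x) (pa E x)) \<pi>)"
    using SB[OF tp] by simp
  have am: "real (length (dl {} \<pi>)) \<le> sum_list (dl {} \<pi>)" using amgm_list(1)[OF pos pr] .
  show "real (card I) \<le> (\<Sum>j\<in>I. dist2 (a j) (pa E j))" using am sb sumeq len by linarith
  assume eq: "(\<Sum>j\<in>I. dist2 (a j) (pa E j)) = real (card I)"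
  have e1: "sum_list (dl {} \<pi>) = real (length (dl {} \<pi>))" using am sb sumeq len eq by linarith
  have all1: "\<forall>t\<in>set (dl {} \<pi>). t = 1" using amgm_list(2)[OF pos pr e1] .
  have tS: "topo Es {} \<pi>" using ET[OF cl d s all1] .
  have e2: "sum_list (dl {} \<pi>) = sum_list (map (\<lambda>x. dist2 (a x) (pa E x)) \<pi>)"
    using am sb sumeq len eq by linarith
  have "\<forall>x\<in>set \<pi>. pa Es x \<subseteq> pa E x" using SBeq[OF tp tS _ _ _ all1 e2] s by simp
  then show "Es \<subseteq> E" using s Es_sub by (auto simp: pa_def)
qed

lemma upper:
  assumes "Es \<subseteq> E" "E \<subseteq> I \<times> I"
  shows "(\<Sum>j\<in>I. dist2 (a j) (pa E j)) \<le> real (card I)"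
proof -
  have "dist2 (a j) (pa E j) \<le> 1" if j: "j \<in> I" for j
  proof -
    have fE: "finite (pa E j)" using assms(2) finI by (auto simp: pa_def intro: finite_subset[of _ I])
    have "pa Es j \<subseteq> pa E j" using assms(1) by (auto simp: pa_def)
    then have "dist2 (a j) (pa E j) \<le> dist2 (a j) (pa Es j)" using dist2_mono[OF fE] by blast
    also have "\<dots> \<le> nrm2 (res (a j) (pa Es j) (\<lambda>k. B k j))" by (rule dist2_le[OF pa_fin])
    also have "nrm2 (res (a j) (pa Es j) (\<lambda>k. B k j)) = nrm2 (\<lambda>i. if i = j then 1 else 0)"
      by (rule nrm2_cong) (simp add: res_def rel[OF j])
    also have "\<dots> = 1" using nrm2_unit[OF j] .
    finally show ?thesis .
  qed
  then have "(\<Sum>j\<in>I. dist2 (a j) (pa E j)) \<le> (\<Sum>j\<in>I. 1)" by (intro sum_mono) auto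
  then show ?thesis by simp
qed

end


lemma (in prob_space) pair_moment:
  fixes eps :: "nat \<Rightarrow> 'a \<Rightarrow> real"
  assumes I: "finite I" and ind: "indep_vars (\<lambda>_. borel) eps I"
    and int: "\<And>i. i \<in> I \<Longrightarrow> integrable M (eps i)"
    and int2: "\<And>i. i \<in> I \<Longrightarrow> integrable M (\<lambda>\<omega>. (eps i \<omega>)\<^sup>2)"
    and m0: "\<And>i. i \<in> I \<Longrightarrow> expectation (eps i) = 0"
    and v: "\<And>i. i \<in> I \<Longrightarrow> expectation (\<lambda>\<omega>. (eps i \<omega>)\<^sup>2) = s"
    and ik: "i \<in> I" "k \<in> I"
  shows "integrable M (\<lambda>\<omega>. eps i \<omega> * eps k \<omega>) \<and>
         expectation (\<lambda>\<omega>. eps i \<omega> * eps k \<omega>) = (if i = k then s else 0)"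
proof (cases "i = k")
  case True
  have e: "(\<lambda>\<omega>. eps i \<omega> * eps k \<omega>) = (\<lambda>\<omega>. (eps i \<omega>)\<^sup>2)"
    using True by (simp add: power2_eq_square)
  show ?thesis unfolding e using int2[OF ik(1)] v[OF ik(1)] True by simp
next
  case False
  have ind2: "indep_vars (\<lambda>_. borel) eps {i, k}"
    by (rule indep_vars_subset[OF ind]) (simp add: ik)
  have fin: "finite {i, k}" by simp
  have intk: "\<And>l. l \<in> {i, k} \<Longrightarrow> integrable M (eps l)"
  proof -
    fix l assume "l \<in> {i, k}"
    then have "l \<in> I" using ik by auto
    then show "integrable M (eps l)" by (rule int)
  qed
  have pr: "(\<Prod>l\<in>{i, k}. eps l \<omega>) = eps i \<omega> * eps k \<omega>" for \<omega> using False by simp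
  have "integrable M (\<lambda>\<omega>. \<Prod>l\<in>{i, k}. eps l \<omega>)" using indep_vars_integrable[OF fin ind2 intk] .
  moreover have "expectation (\<lambda>\<omega>. \<Prod>l\<in>{i, k}. eps l \<omega>) = (\<Prod>l\<in>{i, k}. expectation (eps l))"
    using indep_vars_lebesgue_integral[OF fin ind2 intk] .
  ultimately have "integrable M (\<lambda>\<omega>. eps i \<omega> * eps k \<omega>)"
    and "expectation (\<lambda>\<omega>. eps i \<omega> * eps k \<omega>) = expectation (eps i) * expectation (eps k)"
    unfolding pr using False by simp_all
  then show ?thesis using False m0[OF ik(1)] by simp
qed

lemma (in prob_space) sq_sum:
  fixes eps :: "nat \<Rightarrow> 'a \<Rightarrow> real"
  assumes I: "finite I" and ind: "indep_vars (\<lambda>_. borel) eps I"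
    and int: "\<And>i. i \<in> I \<Longrightarrow> integrable M (eps i)"
    and int2: "\<And>i. i \<in> I \<Longrightarrow> integrable M (\<lambda>\<omega>. (eps i \<omega>)\<^sup>2)"
    and m0: "\<And>i. i \<in> I \<Longrightarrow> expectation (eps i) = 0"
    and v: "\<And>i. i \<in> I \<Longrightarrow> expectation (\<lambda>\<omega>. (eps i \<omega>)\<^sup>2) = s"
  shows "expectation (\<lambda>\<omega>. (\<Sum>i\<in>I. c i * eps i \<omega>)\<^sup>2) = s * (\<Sum>i\<in>I. (c i)\<^sup>2)"
proof -
  note pm = pair_moment[OF I ind int int2 m0 v]
  have eq: "(\<Sum>i\<in>I. c i * eps i \<omega>)\<^sup>2 = (\<Sum>i\<in>I. \<Sum>k\<in>I. (c i * c k) * (eps i \<omega> * eps k \<omega>))" for \<omega>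
    unfolding power2_eq_square sum_product by (intro sum.cong refl) (simp add: algebra_simps)
  have "expectation (\<lambda>\<omega>. (\<Sum>i\<in>I. c i * eps i \<omega>)\<^sup>2)
      = expectation (\<lambda>\<omega>. \<Sum>i\<in>I. \<Sum>k\<in>I. (c i * c k) * (eps i \<omega> * eps k \<omega>))"
    by (simp add: eq)
  also have "\<dots> = (\<Sum>i\<in>I. \<Sum>k\<in>I. (c i * c k) * expectation (\<lambda>\<omega>. eps i \<omega> * eps k \<omega>))"
    using pm by (simp add: integrable_sum integral_sum)
  also have "\<dots> = (\<Sum>i\<in>I. \<Sum>k\<in>I. if i = k then c i * c k * s else 0)"
    using pm by (intro sum.cong refl) auto
  also have "\<dots> = (\<Sum>i\<in>I. s * (c i)\<^sup>2)"
    using I by (intro sum.cong refl) (simp add: power2_eq_square)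
  finally show ?thesis by (simp add: sum_distrib_left)
qed

lemma lin_comb:
  fixes e :: "nat \<Rightarrow> real"
  assumes "finite I" "j \<in> I"
  shows "(\<Sum>i\<in>I. ((if i = j then 1 else 0) + (\<Sum>k\<in>K. b k * f k i)) * e i)
       = e j + (\<Sum>k\<in>K. b k * (\<Sum>i\<in>I. f k i * e i))"
proof -
  have "(\<Sum>i\<in>I. ((if i = j then 1 else 0) + (\<Sum>k\<in>K. b k * f k i)) * e i)
      = (\<Sum>i\<in>I. (if i = j then e i else 0)) + (\<Sum>i\<in>I. \<Sum>k\<in>K. b k * (f k i * e i))"
  proof -
    have "(\<Sum>i\<in>I. (if i = j then 1 else 0) * e i) = (\<Sum>i\<in>I. (if i = j then e i else 0))"
      by (rule sum.cong) auto
    then show ?thesis by (simp add: distrib_right sum.distrib sum_distrib_right mult.assoc)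
  qed
  also have "(\<Sum>i\<in>I. (if i = j then e i else 0)) = e j" using assms by simp
  also have "(\<Sum>i\<in>I. \<Sum>k\<in>K. b k * (f k i * e i)) = (\<Sum>k\<in>K. b k * (\<Sum>i\<in>I. f k i * e i))"
    by (simp add: sum.swap[of _ I K] sum_distrib_left)
  finally show ?thesis .
qed


theorem theorem1:
  fixes M :: "'a measure" and p :: nat and Estar :: "(nat \<times> nat) set"
    and B :: "nat \<Rightarrow> nat \<Rightarrow> real" and eps :: "nat \<Rightarrow> 'a \<Rightarrow> real"
    and X :: "nat \<Rightarrow> 'a \<Rightarrow> real" and \<sigma>2 :: real
  assumes "prob_space M"
    and dag_star: "is_dag p Estar"
    and nonzero: "\<And>k j. (k, j) \<in> Estar \<Longrightarrow> B k j \<noteq> 0"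
    and indep: "prob_space.indep_vars M (\<lambda>_. borel) eps {1..p}"
    and integ: "\<And>j. j \<in> {1..p} \<Longrightarrow> integrable M (eps j)"
    and integ2: "\<And>j. j \<in> {1..p} \<Longrightarrow> integrable M (\<lambda>\<omega>. (eps j \<omega>)\<^sup>2)"
    and mean0: "\<And>j. j \<in> {1..p} \<Longrightarrow> integral\<^sup>L M (eps j) = 0"
    and var: "\<And>j. j \<in> {1..p} \<Longrightarrow>
              integral\<^sup>L M (\<lambda>\<omega>. (eps j \<omega> - integral\<^sup>L M (eps j))\<^sup>2) = \<sigma>2"
    and sigma_pos: "\<sigma>2 > 0"
    and sem: "\<And>j \<omega>. j \<in> {1..p} \<Longrightarrow> \<omega> \<in> space M \<Longrightarrow>
              X j \<omega> = (\<Sum>k\<in>pa Estar j. B k j * X k \<omega>) + eps j \<omega>"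
  shows "total_risk M X p Estar = real p * \<sigma>2 \<and>
         (\<forall>E. is_dag p E \<longrightarrow>
            total_risk M X p E \<ge> total_risk M X p Estar \<and>
            (total_risk M X p E = total_risk M X p Estar \<longleftrightarrow> Estar \<subseteq> E))"
proof -
  interpret P: prob_space M by fact
  define I where "I = {1..p}"
  have finI: "finite I" by (simp add: I_def)
  have EsI: "Estar \<subseteq> I \<times> I" and acyc: "acyclic Estar" using dag_star by (auto simp: is_dag_def I_def)
  have vs: "integral\<^sup>L M (\<lambda>\<omega>. (eps j \<omega>)\<^sup>2) = \<sigma>2" if "j \<in> I" for j
    using var[of j] mean0[of j] that by (simp add: I_def)
  have sq: "integral\<^sup>L M (\<lambda>\<omega>. (\<Sum>i\<in>I. c i * eps i \<omega>)\<^sup>2) = \<sigma>2 * (\<Sum>i\<in>I. (c i)\<^sup>2)" for c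
    using P.sq_sum[OF finI, of eps, OF indep[folded I_def]] integ integ2 mean0 vs
    by (simp add: I_def)
  have paI: "pa Estar j \<subseteq> I" for j using EsI by (auto simp: pa_def)
  have finEs: "finite Estar" using finite_subset[OF EsI] finI by blast
  have wfEs: "wf Estar" using finite_acyclic_wf[OF finEs acyc] .
  have ex: "j \<in> I \<longrightarrow> (\<exists>v. \<forall>\<omega>\<in>space M. X j \<omega> = (\<Sum>i\<in>I. v i * eps i \<omega>))" for j
  proof (induction j rule: wf_induct_rule[OF wfEs])
    case (1 j)
    show ?case
    proof
      assume j: "j \<in> I"
      have "\<forall>k\<in>pa Estar j. \<exists>v. \<forall>\<omega>\<in>space M. X k \<omega> = (\<Sum>i\<in>I. v i * eps i \<omega>)"
      proof
        fix k assume k: "k \<in> pa Estar j"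
        have kj: "(k, j) \<in> Estar" using k by (simp add: pa_def)
        have kI: "k \<in> I" using k paI by blast
        show "\<exists>v. \<forall>\<omega>\<in>space M. X k \<omega> = (\<Sum>i\<in>I. v i * eps i \<omega>)" using 1[OF kj] kI by blast
      qed
      from bchoice[OF this] obtain f
        where f0: "\<forall>k\<in>pa Estar j. \<forall>\<omega>\<in>space M. X k \<omega> = (\<Sum>i\<in>I. f k i * eps i \<omega>)"
        by blast
      have f: "X k \<omega> = (\<Sum>i\<in>I. f k i * eps i \<omega>)" if "k \<in> pa Estar j" "\<omega> \<in> space M" for k \<omega>
        using f0 that by blast
      let ?v = "\<lambda>i. (if i = j then 1 else 0) + (\<Sum>k\<in>pa Estar j. B k j * f k i)"
      have "X j \<omega> = (\<Sum>i\<in>I. ?v i * eps i \<omega>)" if w: "\<omega> \<in> space M" for \<omega>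
      proof -
        have "X j \<omega> = (\<Sum>k\<in>pa Estar j. B k j * X k \<omega>) + eps j \<omega>" using sem[of j \<omega>] j w by (simp add: I_def)
        also have "\<dots> = eps j \<omega> + (\<Sum>k\<in>pa Estar j. B k j * (\<Sum>i\<in>I. f k i * eps i \<omega>))"
          using f[OF _ w] by (simp add: add.commute)
        also have "\<dots> = (\<Sum>i\<in>I. ?v i * eps i \<omega>)"
          using lin_comb[OF finI j, where K="pa Estar j" and b="\<lambda>k. B k j" and f=f and e="\<lambda>i. eps i \<omega>"] by simp
        finally show ?thesis .
      qed
      then have "\<forall>\<omega>\<in>space M. X j \<omega> = (\<Sum>i\<in>I. ?v i * eps i \<omega>)" by blast
      then show "\<exists>v. \<forall>\<omega>\<in>space M. X j \<omega> = (\<Sum>i\<in>I. v i * eps i \<omega>)" by (rule exI[where x="?v"])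
    qed
  qed
  define a where "a j = (SOME v. \<forall>\<omega>\<in>space M. X j \<omega> = (\<Sum>i\<in>I. v i * eps i \<omega>))" for j
  have arep: "X j \<omega> = (\<Sum>i\<in>I. a j i * eps i \<omega>)" if "j \<in> I" "\<omega> \<in> space M" for j \<omega>
  proof -
    have "\<exists>v. \<forall>\<omega>\<in>space M. X j \<omega> = (\<Sum>i\<in>I. v i * eps i \<omega>)" using ex[of j] that(1) by blast
    then have "\<forall>\<omega>\<in>space M. X j \<omega> = (\<Sum>i\<in>I. a j i * eps i \<omega>)"
      unfolding a_def by (rule someI_ex)
    then show ?thesis using that(2) by blast
  qed
  have uniq: "c i = 0" if z: "\<And>\<omega>. \<omega> \<in> space M \<Longrightarrow> (\<Sum>i\<in>I. c i * eps i \<omega>) = 0" and i: "i \<in> I" for c i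
  proof -
    have "integral\<^sup>L M (\<lambda>\<omega>. (\<Sum>i\<in>I. c i * eps i \<omega>)\<^sup>2) = integral\<^sup>L M (\<lambda>\<omega>. 0)"
      using z by (intro Bochner_Integration.integral_cong) auto
    then have "\<sigma>2 * (\<Sum>i\<in>I. (c i)\<^sup>2) = 0" using sq by simp
    then have "(\<Sum>i\<in>I. (c i)\<^sup>2) = 0" using sigma_pos by simp
    then show ?thesis using finI i by (simp add: sum_nonneg_eq_0_iff)
  qed
  have rel: "a j i = (if i = j then 1 else 0) + (\<Sum>k\<in>pa Estar j. B k j * a k i)"
    if j: "j \<in> I" and i: "i \<in> I" for j i
  proof -
    let ?c = "\<lambda>i. a j i - ((if i = j then 1 else 0) + (\<Sum>k\<in>pa Estar j. B k j * a k i))"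
    have "(\<Sum>i\<in>I. ?c i * eps i \<omega>) = 0" if w: "\<omega> \<in> space M" for \<omega>
    proof -
      have "(\<Sum>i\<in>I. ?c i * eps i \<omega>) = (\<Sum>i\<in>I. a j i * eps i \<omega>)
          - (\<Sum>i\<in>I. ((if i = j then 1 else 0) + (\<Sum>k\<in>pa Estar j. B k j * a k i)) * eps i \<omega>)"
        by (simp add: left_diff_distrib sum_subtractf)
      also have "(\<Sum>i\<in>I. ((if i = j then 1 else 0) + (\<Sum>k\<in>pa Estar j. B k j * a k i)) * eps i \<omega>)
          = eps j \<omega> + (\<Sum>k\<in>pa Estar j. B k j * (\<Sum>i\<in>I. a k i * eps i \<omega>))"
        by (rule lin_comb[OF finI j])
      also have "(\<Sum>k\<in>pa Estar j. B k j * (\<Sum>i\<in>I. a k i * eps i \<omega>)) = (\<Sum>k\<in>pa Estar j. B k j * X k \<omega>)"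
      proof (intro sum.cong refl)
        fix k assume "k \<in> pa Estar j"
        then have "k \<in> I" using paI by blast
        then show "B k j * (\<Sum>i\<in>I. a k i * eps i \<omega>) = B k j * X k \<omega>" using arep[of k \<omega>] w by simp
      qed
      also have "(\<Sum>i\<in>I. a j i * eps i \<omega>) = X j \<omega>" using arep j w by simp
      also have "X j \<omega> = (\<Sum>k\<in>pa Estar j. B k j * X k \<omega>) + eps j \<omega>" using sem[of j \<omega>] j w by (simp add: I_def)
      finally show ?thesis by simp
    qed
    then have "?c i = 0" using uniq[of ?c i] i by blast
    then show ?thesis by simp
  qed
  interpret S: sem I a Estar B
  proof
    show "finite I" by (rule finI)
    show "Estar \<subseteq> I \<times> I" by (rule EsI)
    show "acyclic Estar" by (rule acyc)
    show "a j i = (if i = j then 1 else 0) + (\<Sum>k\<in>pa Estar j. B k j * a k i)" if "j \<in> I" "i \<in> I" for j i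
      using rel that by blast
    show "B k j \<noteq> 0" if "(k, j) \<in> Estar" for k j using nonzero that by blast
  qed
  have risk: "resid_risk M X E j = \<sigma>2 * S.dist2 (a j) (pa E j)" if E: "E \<subseteq> I \<times> I" and j: "j \<in> I" for E j
  proof -
    let ?K = "pa E j"
    have KI: "?K \<subseteq> I" using E by (auto simp: pa_def)
    have fK: "finite ?K" using KI finI finite_subset by blast
    have g: "integral\<^sup>L M (\<lambda>\<omega>. (X j \<omega> - (\<Sum>k\<in>?K. \<beta> k * X k \<omega>))\<^sup>2) = \<sigma>2 * S.nrm2 (S.res (a j) ?K \<beta>)" for \<beta>
    proof -
      have "integral\<^sup>L M (\<lambda>\<omega>. (X j \<omega> - (\<Sum>k\<in>?K. \<beta> k * X k \<omega>))\<^sup>2)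
          = integral\<^sup>L M (\<lambda>\<omega>. (\<Sum>i\<in>I. S.res (a j) ?K \<beta> i * eps i \<omega>)\<^sup>2)"
      proof (intro Bochner_Integration.integral_cong refl)
        fix \<omega> assume w: "\<omega> \<in> space M"
        have "(\<Sum>k\<in>?K. \<beta> k * X k \<omega>) = (\<Sum>k\<in>?K. \<beta> k * (\<Sum>i\<in>I. a k i * eps i \<omega>))"
        proof (intro sum.cong refl)
          fix k assume "k \<in> ?K"
          then have "k \<in> I" using KI by blast
          then show "\<beta> k * X k \<omega> = \<beta> k * (\<Sum>i\<in>I. a k i * eps i \<omega>)" using arep[of k \<omega>] w by simp
        qed
        also have "\<dots> = (\<Sum>i\<in>I. (\<Sum>k\<in>?K. \<beta> k * a k i) * eps i \<omega>)"
          by (simp add: sum_distrib_left sum_distrib_right sum.swap[of _ ?K I] mult.assoc)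
        finally have "X j \<omega> - (\<Sum>k\<in>?K. \<beta> k * X k \<omega>) = (\<Sum>i\<in>I. S.res (a j) ?K \<beta> i * eps i \<omega>)"
          using arep[OF j w] by (simp add: S.res_def left_diff_distrib sum_subtractf)
        then show "(X j \<omega> - (\<Sum>k\<in>?K. \<beta> k * X k \<omega>))\<^sup>2 = (\<Sum>i\<in>I. S.res (a j) ?K \<beta> i * eps i \<omega>)\<^sup>2"
          by simp
      qed
      also have "\<dots> = \<sigma>2 * S.nrm2 (S.res (a j) ?K \<beta>)" by (simp add: sq S.nrm2_def)
      finally show ?thesis .
    qed
    obtain \<beta>0 where b0: "S.dist2 (a j) ?K = S.nrm2 (S.res (a j) ?K \<beta>0)"
      using S.dist2_proj[OF fK] by blast
    have "resid_risk M X E j = Inf ((\<lambda>\<beta>. \<sigma>2 * S.nrm2 (S.res (a j) ?K \<beta>)) ` UNIV)"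
      unfolding resid_risk_def g by simp
    also have "\<dots> = \<sigma>2 * S.nrm2 (S.res (a j) ?K \<beta>0)"
    proof (rule cInf_eq_minimum)
      show "\<sigma>2 * S.nrm2 (S.res (a j) ?K \<beta>0) \<in> range (\<lambda>\<beta>. \<sigma>2 * S.nrm2 (S.res (a j) ?K \<beta>))" by blast
      fix x assume "x \<in> range (\<lambda>\<beta>. \<sigma>2 * S.nrm2 (S.res (a j) ?K \<beta>))"
      then obtain \<beta> where x: "x = \<sigma>2 * S.nrm2 (S.res (a j) ?K \<beta>)" by blast
      have "S.nrm2 (S.res (a j) ?K \<beta>0) \<le> S.nrm2 (S.res (a j) ?K \<beta>)"
        using S.dist2_le[OF fK] b0 by metis
      then show "\<sigma>2 * S.nrm2 (S.res (a j) ?K \<beta>0) \<le> x" using x sigma_pos by simp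
    qed
    finally show ?thesis using b0 by simp
  qed
  have tot: "total_risk M X p E = \<sigma>2 * (\<Sum>j\<in>I. S.dist2 (a j) (pa E j))" if E: "E \<subseteq> I \<times> I" for E
    unfolding total_risk_def using risk[OF E] by (simp add: I_def sum_distrib_left)
  have cI: "card I = p" by (simp add: I_def)
  have Rs: "(\<Sum>j\<in>I. S.dist2 (a j) (pa Estar j)) = real p"
    using S.lower(1)[OF EsI acyc] S.upper[OF order_refl EsI] cI by simp
  have t1: "total_risk M X p Estar = real p * \<sigma>2" using tot[OF EsI] Rs by simp
  show ?thesis
  proof (intro conjI allI impI)
    show "total_risk M X p Estar = real p * \<sigma>2" by (rule t1)
    fix E assume dE: "is_dag p E"
    have EI: "E \<subseteq> I \<times> I" and aE: "acyclic E" using dE by (auto simp: is_dag_def I_def)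
    have lo: "real p \<le> (\<Sum>j\<in>I. S.dist2 (a j) (pa E j))" using S.lower(1)[OF EI aE] cI by simp
    show "total_risk M X p Estar \<le> total_risk M X p E"
      using t1 tot[OF EI] lo sigma_pos by (simp add: mult.commute)
    show "total_risk M X p E = total_risk M X p Estar \<longleftrightarrow> Estar \<subseteq> E"
    proof
      assume "total_risk M X p E = total_risk M X p Estar"
      then have "(\<Sum>j\<in>I. S.dist2 (a j) (pa E j)) = real (card I)"
        using t1 tot[OF EI] sigma_pos cI by (simp add: mult.commute)
      then show "Estar \<subseteq> E" using S.lower(2)[OF EI aE] by blast
    next
      assume "Estar \<subseteq> E"
      then have "(\<Sum>j\<in>I. S.dist2 (a j) (pa E j)) = real p"
        using S.upper[OF _ EI] lo cI by (simp add: antisym)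
      then show "total_risk M X p E = total_risk M X p Estar" using t1 tot[OF EI] by simp
    qed
  qed
qed

end
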